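(* Let $G$ be a finite $p$-group, $k$ a field of characteristic $p$, and $I$ a non-zero proper ideal of $kG$. Then $I$, as a $kG$-module, is indecomposable and projective-free. In particular, every non-zero power $J^i(kG)$ of the Jacobson radical $J(kG)$ is an indecomposable projective-free $kG$-module.
   Context: A $kG$-module is projective-free if it has no non-zero projective direct summand (submodule). $J(kG)$ denotes the Jacobson radical of $kG$. *)

theory Defs
  imports "HOL-Algebra.Group" "HOL-Library.Function_Algebras" "HOL-Computational_Algebra.Primes"
begin

text \<open>Elements of kG are functions G -> k vanishing outside the carrier of G
  (sum over g of a_g g  corresponds to the function g |-> a_g).
  Addition is pointwise, multiplication is convolution.\<close>

definition grpalg :: "('g, 'm) monoid_scheme \<Rightarrow> ('g \<Rightarrow> 'k::field) set" where
  "grpalg G = {f. \<forall>x. x \<notin> carrier G \<longrightarrow> f x = 0}"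

definition gmult :: "('g, 'm) monoid_scheme \<Rightarrow> ('g \<Rightarrow> 'k::field) \<Rightarrow> ('g \<Rightarrow> 'k) \<Rightarrow> ('g \<Rightarrow> 'k)" where
  "gmult G f h = (\<lambda>x. if x \<in> carrier G
      then (\<Sum>y\<in>carrier G. f y * h (inv\<^bsub>G\<^esub> y \<otimes>\<^bsub>G\<^esub> x)) else 0)"

definition ga_ideal :: "('g, 'm) monoid_scheme \<Rightarrow> ('g \<Rightarrow> 'k::field) set \<Rightarrow> bool" where
  "ga_ideal G I \<longleftrightarrow> I \<subseteq> grpalg G \<and> 0 \<in> I \<and> (\<forall>a\<in>I. \<forall>b\<in>I. a + b \<in> I)
     \<and> (\<forall>r\<in>grpalg G. \<forall>a\<in>I. gmult G r a \<in> I \<and> gmult G a r \<in> I)"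

text \<open>(Left) kG-submodules of the regular module kG, i.e. left ideals.
  (Closure under k-scalars follows from closure under multiplication by c*1.)\<close>
definition ga_submod :: "('g, 'm) monoid_scheme \<Rightarrow> ('g \<Rightarrow> 'k::field) set \<Rightarrow> bool" where
  "ga_submod G M \<longleftrightarrow> M \<subseteq> grpalg G \<and> 0 \<in> M \<and> (\<forall>a\<in>M. \<forall>b\<in>M. a + b \<in> M)
     \<and> (\<forall>r\<in>grpalg G. \<forall>a\<in>M. gmult G r a \<in> M)"

definition ga_summand :: "('g, 'm) monoid_scheme \<Rightarrow> ('g \<Rightarrow> 'k::field) set \<Rightarrow> ('g \<Rightarrow> 'k) set \<Rightarrow> bool" where
  "ga_summand G A M \<longleftrightarrow> (\<exists>B. ga_submod G A \<and> ga_submod G B \<and> A \<subseteq> M \<and> B \<subseteq> M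
      \<and> A \<inter> B = {0} \<and> M = {a + b | a b. a \<in> A \<and> b \<in> B})"

definition ga_indecomposable :: "('g, 'm) monoid_scheme \<Rightarrow> ('g \<Rightarrow> 'k::field) set \<Rightarrow> bool" where
  "ga_indecomposable G M \<longleftrightarrow> M \<noteq> {0} \<and>
     (\<forall>A B. ga_submod G A \<and> ga_submod G B \<and> A \<subseteq> M \<and> B \<subseteq> M \<and> A \<inter> B = {0}
        \<and> M = {a + b | a b. a \<in> A \<and> b \<in> B} \<longrightarrow> A = {0} \<or> B = {0})"

definition ga_free :: "('g, 'm) monoid_scheme \<Rightarrow> nat \<Rightarrow> (nat \<Rightarrow> 'g \<Rightarrow> 'k::field) set" where
  "ga_free G n = {v. (\<forall>j<n. v j \<in> grpalg G) \<and> (\<forall>j\<ge>n. v j = 0)}"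

text \<open>Projectivity of a (finitely generated) kG-module Q (here Q a submodule of kG,
  hence finite dimensional): Q is a retract, via kG-linear maps, of a free
  module (kG)^n of finite rank.\<close>
definition ga_projective :: "('g, 'm) monoid_scheme \<Rightarrow> ('g \<Rightarrow> 'k::field) set \<Rightarrow> bool" where
  "ga_projective G Q \<longleftrightarrow> (\<exists>n (i :: ('g \<Rightarrow> 'k) \<Rightarrow> nat \<Rightarrow> 'g \<Rightarrow> 'k) r.
      (\<forall>q\<in>Q. i q \<in> ga_free G n)
    \<and> (\<forall>q\<in>Q. \<forall>q'\<in>Q. i (q + q') = i q + i q')
    \<and> (\<forall>a\<in>grpalg G. \<forall>q\<in>Q. i (gmult G a q) = (\<lambda>j. gmult G a (i q j)))
    \<and> (\<forall>v\<in>ga_free G n. r v \<in> Q)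
    \<and> (\<forall>v\<in>ga_free G n. \<forall>w\<in>ga_free G n. r (v + w) = r v + r w)
    \<and> (\<forall>a\<in>grpalg G. \<forall>v\<in>ga_free G n. r (\<lambda>j. gmult G a (v j)) = gmult G a (r v))
    \<and> (\<forall>q\<in>Q. r (i q) = q))"

definition ga_projective_free :: "('g, 'm) monoid_scheme \<Rightarrow> ('g \<Rightarrow> 'k::field) set \<Rightarrow> bool" where
  "ga_projective_free G M \<longleftrightarrow> (\<forall>Q. ga_summand G Q M \<and> Q \<noteq> {0} \<longrightarrow> \<not> ga_projective G Q)"

definition ga_max_left :: "('g, 'm) monoid_scheme \<Rightarrow> ('g \<Rightarrow> 'k::field) set \<Rightarrow> bool" where
  "ga_max_left G M \<longleftrightarrow> ga_submod G M \<and> M \<noteq> grpalg G \<and>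
     (\<forall>N. ga_submod G N \<and> M \<subseteq> N \<longrightarrow> N = M \<or> N = grpalg G)"

definition ga_jacobson :: "('g, 'm) monoid_scheme \<Rightarrow> ('g \<Rightarrow> 'k::field) set" where
  "ga_jacobson G = grpalg G \<inter> \<Inter>{M. ga_max_left G M}"

inductive_set ga_prod :: "('g, 'm) monoid_scheme \<Rightarrow> ('g \<Rightarrow> 'k::field) set \<Rightarrow> ('g \<Rightarrow> 'k) set \<Rightarrow> ('g \<Rightarrow> 'k) set"
  for G A B where
  zero: "0 \<in> ga_prod G A B"
| prod: "a \<in> A \<Longrightarrow> b \<in> B \<Longrightarrow> gmult G a b \<in> ga_prod G A B"
| add: "x \<in> ga_prod G A B \<Longrightarrow> y \<in> ga_prod G A B \<Longrightarrow> x + y \<in> ga_prod G A B"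

fun ga_jpow :: "('g, 'm) monoid_scheme \<Rightarrow> nat \<Rightarrow> ('g \<Rightarrow> 'k::field) set" where
  "ga_jpow G 0 = grpalg G"
| "ga_jpow G (Suc i) = ga_prod G (ga_jpow G i) (ga_jacobson G)"

end

theory Submission
  imports Defs "HOL-Algebra.Group_Action" "HOL.Vector_Spaces"
begin

definition gdelta :: "('g, 'm) monoid_scheme \<Rightarrow> 'g \<Rightarrow> 'g \<Rightarrow> 'k::field" where
  "gdelta G g = (\<lambda>x. if x = g then 1 else 0)"

definition gnrm :: "('g, 'm) monoid_scheme \<Rightarrow> 'g \<Rightarrow> 'k::field" where
  "gnrm G = (\<lambda>x. if x \<in> carrier G then 1 else 0)"

definition gaug :: "('g, 'm) monoid_scheme \<Rightarrow> ('g \<Rightarrow> 'k::field) \<Rightarrow> 'k" where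
  "gaug G f = (\<Sum>x\<in>carrier G. f x)"

definition gsc :: "'k::field \<Rightarrow> ('g \<Rightarrow> 'k) \<Rightarrow> ('g \<Rightarrow> 'k)" where
  "gsc c f = (\<lambda>x. c * f x)"

definition augI :: "('g, 'm) monoid_scheme \<Rightarrow> ('g \<Rightarrow> 'k::field) set" where
  "augI G = {f \<in> grpalg G. gaug G f = 0}"

lemma sum_fun_apply: "sum (f :: 'i \<Rightarrow> 'a \<Rightarrow> 'b::comm_monoid_add) A x = (\<Sum>i\<in>A. f i x)"
  by (induction A rule: infinite_finite_induct) auto

context group begin

lemma sum_lmult: "z \<in> carrier G \<Longrightarrow> (\<Sum>w\<in>carrier G. F (z \<otimes> w)) = sum F (carrier G)"
  apply (rule sum.reindex_bij_betw)
  apply (rule bij_betw_byWitness[where f'="\<lambda>y. inv z \<otimes> y"])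
  by (auto simp: m_assoc[symmetric])

lemma sum_invmult: "x \<in> carrier G \<Longrightarrow> (\<Sum>y\<in>carrier G. F (inv y \<otimes> x)) = sum F (carrier G)"
  apply (rule sum.reindex_bij_betw)
  apply (rule bij_betw_byWitness[where f'="\<lambda>w. x \<otimes> inv w"])
     apply (auto simp: m_assoc inv_mult_group)
  by (simp add: m_assoc[symmetric])

lemma gmult_in: "gmult G a b \<in> grpalg G"
  by (simp add: gmult_def grpalg_def)

lemma gmult_add_right: "gmult G a (b + c) = gmult G a b + gmult G a c"
  by (auto simp: gmult_def fun_eq_iff distrib_left sum.distrib)

lemma gmult_add_left: "gmult G (a + b) c = gmult G a c + gmult G b c"
  by (auto simp: gmult_def fun_eq_iff distrib_right sum.distrib)

lemma gmult_sc_right: "gmult G a (gsc c b) = gsc c (gmult G a b)"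
  by (auto simp: gmult_def gsc_def fun_eq_iff sum_distrib_left ac_simps)

lemma gmult_sc_left: "gmult G (gsc c a) b = gsc c (gmult G a b)"
  by (auto simp: gmult_def gsc_def fun_eq_iff sum_distrib_left ac_simps)

lemma gmult_zero_right: "gmult G a 0 = 0"
  by (auto simp: gmult_def fun_eq_iff)

lemma gmult_zero_left: "gmult G 0 a = 0"
  by (auto simp: gmult_def fun_eq_iff)

lemma gmult_assoc: "gmult G (gmult G a b) c = gmult G a (gmult G b c)"
proof (rule ext)
  fix x
  show "gmult G (gmult G a b) c x = gmult G a (gmult G b c) x"
  proof (cases "x \<in> carrier G")
    case False thus ?thesis by (simp add: gmult_def)
  next
    case x: True
    have "gmult G (gmult G a b) c x = (\<Sum>y\<in>carrier G. \<Sum>z\<in>carrier G. a z * b (inv z \<otimes> y) * c (inv y \<otimes> x))"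
      using x by (simp add: gmult_def sum_distrib_right)
    also have "\<dots> = (\<Sum>z\<in>carrier G. \<Sum>y\<in>carrier G. a z * b (inv z \<otimes> y) * c (inv y \<otimes> x))"
      by (rule sum.swap)
    also have "\<dots> = (\<Sum>z\<in>carrier G. \<Sum>w\<in>carrier G. a z * b w * c (inv w \<otimes> (inv z \<otimes> x)))"
    proof (rule sum.cong[OF refl])
      fix z assume z: "z \<in> carrier G"
      have "(\<Sum>y\<in>carrier G. a z * b (inv z \<otimes> y) * c (inv y \<otimes> x))
          = (\<Sum>w\<in>carrier G. a z * b (inv z \<otimes> (z \<otimes> w)) * c (inv (z \<otimes> w) \<otimes> x))"
        using sum_lmult[OF z, of "\<lambda>y. a z * b (inv z \<otimes> y) * c (inv y \<otimes> x)"] by simp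
      also have "\<dots> = (\<Sum>w\<in>carrier G. a z * b w * c (inv w \<otimes> (inv z \<otimes> x)))"
        using z x by (intro sum.cong refl) (simp add: m_assoc[symmetric] inv_mult_group)
      finally show "(\<Sum>y\<in>carrier G. a z * b (inv z \<otimes> y) * c (inv y \<otimes> x))
          = (\<Sum>w\<in>carrier G. a z * b w * c (inv w \<otimes> (inv z \<otimes> x)))" .
    qed
    also have "\<dots> = gmult G a (gmult G b c) x"
      using x by (simp add: gmult_def sum_distrib_left mult.assoc)
    finally show ?thesis .
  qed
qed

lemma invmult_eq_one: "x \<in> carrier G \<Longrightarrow> y \<in> carrier G \<Longrightarrow> inv y \<otimes> x = \<one> \<longleftrightarrow> x = y"
proof
  assume "x \<in> carrier G" "y \<in> carrier G" "inv y \<otimes> x = \<one>"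
  then have "y \<otimes> (inv y \<otimes> x) = y" by simp
  then show "x = y" using \<open>x \<in> carrier G\<close> \<open>y \<in> carrier G\<close> by (simp add: m_assoc[symmetric])
qed simp

end

locale fgroup = group + assumes fin: "finite (carrier G)"

context fgroup begin

lemma gdelta_left: "g \<in> carrier G \<Longrightarrow> gmult G (gdelta G g) f = (\<lambda>x. if x \<in> carrier G then f (inv g \<otimes> x) else 0)"
proof (rule ext)
  fix x assume g: "g \<in> carrier G"
  have e: "(\<lambda>y. gdelta G g y * f (inv y \<otimes> x)) = (\<lambda>y. if y = g then f (inv y \<otimes> x) else 0)"
    by (auto simp: gdelta_def fun_eq_iff)
  show "gmult G (gdelta G g) f x = (if x \<in> carrier G then f (inv g \<otimes> x) else 0)"
  proof (cases "x \<in> carrier G")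
    case True
    have "gmult G (gdelta G g) f x = (\<Sum>y\<in>carrier G. gdelta G g y * f (inv y \<otimes> x))"
      using True by (simp add: gmult_def)
    also have "\<dots> = (\<Sum>y\<in>carrier G. if y = g then f (inv y \<otimes> x) else 0)"
      by (simp only: e)
    also have "\<dots> = f (inv g \<otimes> x)" using g fin by simp
    finally show ?thesis using True by simp
  qed (simp add: gmult_def)
qed

lemma gdelta_one_left: "f \<in> grpalg G \<Longrightarrow> gmult G (gdelta G \<one>) f = f"
  by (auto simp: gdelta_left grpalg_def fun_eq_iff)

lemma gdelta_one_right: "f \<in> grpalg G \<Longrightarrow> gmult G f (gdelta G \<one>) = f"
proof (rule ext)
  fix x assume f: "f \<in> grpalg G"
  show "gmult G f (gdelta G \<one>) x = f x"
  proof (cases "x \<in> carrier G")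
    case False thus ?thesis using f by (simp add: gmult_def grpalg_def)
  next
    case True
    have "(\<Sum>y\<in>carrier G. f y * gdelta G \<one> (inv y \<otimes> x)) = (\<Sum>y\<in>carrier G. if y = x then f y else 0)"
      using True by (intro sum.cong refl) (auto simp: gdelta_def invmult_eq_one)
    thus ?thesis using True by (simp add: gmult_def sum.delta' fin)
  qed
qed

lemma gdelta_mult: "g \<in> carrier G \<Longrightarrow> h \<in> carrier G \<Longrightarrow> gmult G (gdelta G g) (gdelta G h) = (gdelta G (g \<otimes> h) :: 'a \<Rightarrow> 'k::field)"
proof (rule ext)
  fix x assume g: "g \<in> carrier G" and h: "h \<in> carrier G"
  have "x \<in> carrier G \<Longrightarrow> inv g \<otimes> x = h \<longleftrightarrow> x = g \<otimes> h"
    using g h by (metis inv_closed m_closed inv_solve_left')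
  then show "gmult G (gdelta G g) (gdelta G h) x = (gdelta G (g \<otimes> h) x :: 'k)"
    using g h by (simp add: gdelta_left) (auto simp: gdelta_def)
qed

lemma gsc_eq_mult: "f \<in> grpalg G \<Longrightarrow> gsc c f = gmult G (gsc c (gdelta G \<one>)) f"
  by (simp add: gmult_sc_left gdelta_one_left)

lemma nrm_left: "gmult G (gnrm G) f = gsc (gaug G f) (gnrm G)"
proof (rule ext)
  fix x show "gmult G (gnrm G) f x = gsc (gaug G f) (gnrm G) x"
    by (cases "x \<in> carrier G") (simp_all add: gmult_def gnrm_def gsc_def gaug_def sum_invmult)
qed

lemma nrm_right: "gmult G f (gnrm G) = gsc (gaug G f) (gnrm G)"
proof (rule ext)
  fix x show "gmult G f (gnrm G) x = gsc (gaug G f) (gnrm G) x"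
    by (cases "x \<in> carrier G") (simp_all add: gmult_def gnrm_def gsc_def gaug_def)
qed

lemma aug_mult: "gaug G (gmult G a b) = gaug G a * gaug G b"
proof -
  have "gaug G (gmult G a b) = (\<Sum>x\<in>carrier G. \<Sum>y\<in>carrier G. a y * b (inv y \<otimes> x))"
    by (simp add: gaug_def gmult_def)
  also have "\<dots> = (\<Sum>y\<in>carrier G. \<Sum>x\<in>carrier G. a y * b (inv y \<otimes> x))" by (rule sum.swap)
  also have "\<dots> = (\<Sum>y\<in>carrier G. a y * gaug G b)"
    by (intro sum.cong refl) (simp add: sum_distrib_left[symmetric] gaug_def sum_lmult)
  finally show ?thesis by (simp add: gaug_def sum_distrib_right)
qed

lemma gsc_apply[simp]: "gsc c f x = c * f x" by (simp add: gsc_def)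

lemma grpalg_zero: "0 \<in> grpalg G" by (simp add: grpalg_def)
lemma grpalg_add: "a \<in> grpalg G \<Longrightarrow> b \<in> grpalg G \<Longrightarrow> a + b \<in> grpalg G" by (simp add: grpalg_def)

lemma gnrm_in: "gnrm G \<in> grpalg G" by (simp add: gnrm_def grpalg_def)
lemma gnrm_nz: "gnrm G \<noteq> (0 :: 'a \<Rightarrow> 'k::field)"
proof
  assume "gnrm G = (0 :: 'a \<Rightarrow> 'k)"
  then have "gnrm G \<one> = (0::'k)" by simp
  thus False by (simp add: gnrm_def)
qed

lemma gdelta_in: "g \<in> carrier G \<Longrightarrow> gdelta G g \<in> grpalg G"
  by (auto simp: gdelta_def grpalg_def)

lemma gsc_in: "f \<in> grpalg G \<Longrightarrow> gsc c f \<in> grpalg G"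
  by (auto simp: grpalg_def)

lemma fixed_nrm:
  assumes f: "f \<in> grpalg G" and fx: "\<And>g. g \<in> carrier G \<Longrightarrow> gmult G (gdelta G g) f = f"
  shows "f = gsc (f \<one>) (gnrm G)"
proof (rule ext)
  fix x show "f x = gsc (f \<one>) (gnrm G) x"
  proof (cases "x \<in> carrier G")
    case True
    have "gmult G (gdelta G x) f x = f x" using fx[OF True] by simp
    then have "f (inv x \<otimes> x) = f x" using True by (simp add: gdelta_left)
    then show ?thesis using True by (simp add: gnrm_def)
  next
    case False thus ?thesis using f by (simp add: gnrm_def grpalg_def)
  qed
qed

lemma submod_in: "ga_submod G M \<Longrightarrow> a \<in> M \<Longrightarrow> a \<in> grpalg G"
  by (auto simp: ga_submod_def)

lemma submod_mult: "ga_submod G M \<Longrightarrow> r \<in> grpalg G \<Longrightarrow> a \<in> M \<Longrightarrow> gmult G r a \<in> M"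
  by (auto simp: ga_submod_def)

lemma submod_add: "ga_submod G M \<Longrightarrow> a \<in> M \<Longrightarrow> b \<in> M \<Longrightarrow> a + b \<in> M"
  by (auto simp: ga_submod_def)

lemma submod_zero: "ga_submod G M \<Longrightarrow> 0 \<in> M"
  by (auto simp: ga_submod_def)

lemma submod_sc: "ga_submod G M \<Longrightarrow> a \<in> M \<Longrightarrow> gsc c a \<in> M"
  using gsc_eq_mult[OF submod_in, of M a c] submod_mult[of M "gsc c (gdelta G \<one>)" a]
    gsc_in[OF gdelta_in[OF one_closed]] by metis

lemma submod_neg: "ga_submod G M \<Longrightarrow> a \<in> M \<Longrightarrow> - a \<in> M"
  using submod_sc[of M a "-1"] by (simp add: gsc_def fun_Compl_def)

lemma submod_diff: "ga_submod G M \<Longrightarrow> a \<in> M \<Longrightarrow> b \<in> M \<Longrightarrow> a - b \<in> M"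
  using submod_add[of M a "-b"] submod_neg[of M b] by simp

lemma submod_sum: "ga_submod G M \<Longrightarrow> (\<And>i. i \<in> A \<Longrightarrow> f i \<in> M) \<Longrightarrow> sum f A \<in> M"
proof (induction A rule: infinite_finite_induct)
  case (infinite A) thus ?case by (metis sum.infinite submod_zero)
next
  case empty thus ?case by (metis sum.empty submod_zero)
next
  case (insert x F) thus ?case using submod_add[of M "f x" "sum f F"] by (metis insertI1 insertI2 sum.insert)
qed

lemma gmult_sum_right: "gmult G a (sum f A) = (\<Sum>i\<in>A. gmult G a (f i))"
proof (induction A rule: infinite_finite_induct)
  case (infinite A) thus ?case by (metis sum.infinite gmult_zero_right)
next
  case empty thus ?case by (metis sum.empty gmult_zero_right)
next
  case (insert x F) thus ?case by (metis sum.insert gmult_add_right)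
qed

end

locale pgroup = fgroup + fixes p n assumes prime: "prime p" and cardG: "card (carrier G) = p ^ n"

context pgroup begin

lemma prime_field_facts:
  assumes CH: "CHAR('k::field) = p"
  defines "P \<equiv> (of_nat ` {..<p} :: 'k set)"
  shows "\<And>j. of_nat j \<in> P" "\<And>c d. c \<in> P \<Longrightarrow> d \<in> P \<Longrightarrow> c + d \<in> P"
    "\<And>c. c \<in> P \<Longrightarrow> - c \<in> P" "finite P" "card P = p"
proof -
  have p0: "(of_nat p :: 'k) = 0" using CH of_nat_CHAR by metis
  show ofP: "of_nat j \<in> P" for j
  proof -
    have "(of_nat j :: 'k) = of_nat (j mod p) + of_nat p * of_nat (j div p)"
      by (metis of_nat_add of_nat_mult mod_mult_div_eq)
    then have "(of_nat j :: 'k) = of_nat (j mod p)" using p0 by simp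
    moreover have "j mod p < p" using prime prime_gt_0_nat by auto
    ultimately show ?thesis unfolding P_def by auto
  qed
  show "c \<in> P \<Longrightarrow> d \<in> P \<Longrightarrow> c + d \<in> P" for c d
    unfolding P_def using ofP[unfolded P_def] by (auto simp flip: of_nat_add)
  show "c \<in> P \<Longrightarrow> - c \<in> P" for c
  proof -
    assume "c \<in> P"
    then obtain j where c: "c = of_nat j" unfolding P_def by auto
    have p1: "1 \<le> p" using prime prime_gt_0_nat by (simp add: Suc_le_eq)
    have "(of_nat ((p - 1) * j) :: 'k) = (of_nat p - 1) * of_nat j"
      using p1 by (simp add: of_nat_diff)
    also have "\<dots> = - c" using p0 c by simp
    finally show "- c \<in> P" using ofP by metis
  qed
  show "finite P" unfolding P_def by simp
  have "inj_on (of_nat :: nat \<Rightarrow> 'k) {..<p}"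
  proof (rule inj_onI)
    have key: "a < p \<Longrightarrow> b < p \<Longrightarrow> a \<le> b \<Longrightarrow> (of_nat a :: 'k) = of_nat b \<Longrightarrow> a = b" for a b
    proof -
      assume "a < p" "b < p" "a \<le> b" "(of_nat a :: 'k) = of_nat b"
      then have "(of_nat (b - a) :: 'k) = 0" by (simp add: of_nat_diff)
      then have "p dvd (b - a)" using CH of_nat_eq_0_iff_char_dvd by metis
      moreover have "b - a < p" using \<open>b < p\<close> by simp
      ultimately have "b - a = 0" using dvd_imp_le by fastforce
      then show "a = b" using \<open>a \<le> b\<close> by simp
    qed
    fix a b assume "a \<in> {..<p}" "b \<in> {..<p}" "(of_nat a :: 'k) = of_nat b"
    then show "a = b" using key[of a b] key[of b a] by (cases "a \<le> b") auto
  qed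
  then show "card P = p" unfolding P_def by (simp add: card_image)
qed


lemma gsc_zero[simp]: "gsc 0 f = 0" by (simp add: fun_eq_iff)
lemma gsc_one[simp]: "gsc 1 f = f" by (simp add: fun_eq_iff)
lemma gsc_zero_right[simp]: "gsc c 0 = 0" by (simp add: fun_eq_iff)
lemma gsc_add_left: "gsc (c + d) f = gsc c f + gsc d f" by (simp add: fun_eq_iff distrib_right)
lemma gsc_gsc: "gsc c (gsc d f) = gsc (c * d) f" by (simp add: fun_eq_iff)

lemma FP:
  fixes M :: "('a \<Rightarrow> 'k::field) set"
  assumes CH: "CHAR('k) = p" and M: "ga_submod G M" and m: "m \<in> M" "m \<noteq> 0"
  shows "gnrm G \<in> M"
proof -
  define P where "P = (of_nat ` {..<p} :: 'k set)"
  note PF = prime_field_facts[OF CH, folded P_def]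
  have P0: "0 \<in> P" using PF(1)[of 0] by simp
  define \<Phi> where "\<Phi> c = (\<Sum>h\<in>carrier G. gsc (c h) (gmult G (gdelta G h) m))" for c
  define T where "T = carrier G \<rightarrow>\<^sub>E P"
  define S where "S = \<Phi> ` T"
  have mG: "m \<in> grpalg G" using M m submod_in by blast
  have finT: "finite T" unfolding T_def using fin PF(4) by (simp add: finite_PiE)
  have finS: "finite S" unfolding S_def using finT by simp
  have PhiM: "\<Phi> c \<in> M" for c
    unfolding \<Phi>_def using M m
    by (intro submod_sum submod_sc submod_mult gdelta_in) auto
  have SM: "S \<subseteq> M" unfolding S_def using PhiM by auto
  have SG: "S \<subseteq> grpalg G" using SM M submod_in by blast
  define E where "E c = (\<lambda>h\<in>carrier G. if h = \<one> then c else (0::'k))" for c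
  have ET: "c \<in> P \<Longrightarrow> E c \<in> T" for c unfolding E_def T_def using P0 by auto
  have PhiE: "\<Phi> (E c) = gsc c m" for c
  proof -
    have "\<Phi> (E c) = (\<Sum>h\<in>carrier G. if h = \<one> then gsc c (gmult G (gdelta G h) m) else 0)"
      unfolding \<Phi>_def E_def by (intro sum.cong refl) auto
    also have "\<dots> = gsc c m" using fin by (simp add: sum.delta gdelta_one_left mG)
    finally show ?thesis .
  qed
  have Phi_add: "\<Phi> (\<lambda>h\<in>carrier G. c1 h + c2 h) = \<Phi> c1 + \<Phi> c2" for c1 c2
  proof -
    have "\<Phi> (\<lambda>h\<in>carrier G. c1 h + c2 h) = (\<Sum>h\<in>carrier G. gsc (c1 h) (gmult G (gdelta G h) m) + gsc (c2 h) (gmult G (gdelta G h) m))"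
      unfolding \<Phi>_def by (intro sum.cong refl) (simp add: gsc_add_left)
    thus ?thesis unfolding \<Phi>_def by (simp only: sum.distrib)
  qed
  have S_trans: "s \<in> S \<Longrightarrow> c \<in> P \<Longrightarrow> s + gsc c m \<in> S" for s c
  proof -
    assume s: "s \<in> S" and c: "c \<in> P"
    then obtain c0 where c0: "c0 \<in> T" "s = \<Phi> c0" unfolding S_def by auto
    have "s + gsc c m = \<Phi> (\<lambda>h\<in>carrier G. c0 h + E c h)" using c0 PhiE Phi_add by simp
    moreover have "(\<lambda>h\<in>carrier G. c0 h + E c h) \<in> T"
      using c0(1) ET[OF c] PF(2) unfolding T_def by (auto simp: PiE_iff)
    ultimately show ?thesis unfolding S_def by auto
  qed
  have pS: "p dvd card S"
  proof -
    define cos where "cos s = (\<lambda>c. s + gsc c m) ` P" for s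
    define C where "C = cos ` S"
    have cos_eq: "cos (s + gsc a m) = cos s" if "a \<in> P" for s a
    proof
      show "cos (s + gsc a m) \<subseteq> cos s"
      proof
        fix t assume "t \<in> cos (s + gsc a m)"
        then obtain c where c: "c \<in> P" "t = s + gsc a m + gsc c m" unfolding cos_def by auto
        then have "t = s + gsc (a + c) m" by (simp add: gsc_add_left add.assoc)
        thus "t \<in> cos s" unfolding cos_def using PF(2)[OF that c(1)] by auto
      qed
      show "cos s \<subseteq> cos (s + gsc a m)"
      proof
        fix t assume "t \<in> cos s"
        then obtain c where c: "c \<in> P" "t = s + gsc c m" unfolding cos_def by auto
        then have "t = (s + gsc a m) + gsc (c + - a) m" by (simp add: gsc_add_left fun_eq_iff algebra_simps)
        thus "t \<in> cos (s + gsc a m)" unfolding cos_def using PF(2)[OF c(1) PF(3)[OF that]] by auto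
      qed
    qed
    have UC: "\<Union>C = S"
    proof
      show "\<Union>C \<subseteq> S" unfolding C_def cos_def using S_trans by auto
      show "S \<subseteq> \<Union>C"
      proof
        fix s assume "s \<in> S"
        moreover have "s = s + gsc 0 m" by simp
        ultimately show "s \<in> \<Union>C" unfolding C_def cos_def using P0 by blast
      qed
    qed
    obtain x0 where x0: "m x0 \<noteq> 0" using m(2) by (auto simp: fun_eq_iff)
    have card_cos: "card (cos s) = p" for s
    proof -
      have "inj_on (\<lambda>c. s + gsc c m) P"
      proof (rule inj_onI)
        fix c d assume "s + gsc c m = s + gsc d m"
        then have "c * m x0 = d * m x0" by (metis add_left_cancel gsc_apply)
        thus "c = d" using x0 by simp
      qed
      thus ?thesis unfolding cos_def using PF(5) by (simp add: card_image)
    qed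
    have disj: "\<forall>c1\<in>C. \<forall>c2\<in>C. c1 \<noteq> c2 \<longrightarrow> c1 \<inter> c2 = {}"
    proof (intro ballI impI)
      fix c1 c2 assume c1: "c1 \<in> C" and c2: "c2 \<in> C" and ne: "c1 \<noteq> c2"
      show "c1 \<inter> c2 = {}"
      proof (rule ccontr)
        assume "c1 \<inter> c2 \<noteq> {}"
        then obtain t where t: "t \<in> c1" "t \<in> c2" by auto
        obtain s1 s2 where s12: "c1 = cos s1" "c2 = cos s2" using c1 c2 unfolding C_def by auto
        obtain a1 where "a1 \<in> P" "t = s1 + gsc a1 m" using t(1) s12 unfolding cos_def by auto
        then have "cos t = c1" using cos_eq s12 by simp
        moreover obtain a2 where "a2 \<in> P" "t = s2 + gsc a2 m" using t(2) s12 unfolding cos_def by auto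
        then have "cos t = c2" using cos_eq s12 by simp
        ultimately show False using ne by simp
      qed
    qed
    have "p * card C = card (\<Union>C)"
    proof (rule card_partition)
      show "finite C" unfolding C_def using finS by simp
      show "finite (\<Union>C)" using UC finS by simp
      show "\<And>c. c \<in> C \<Longrightarrow> card c = p" unfolding C_def using card_cos by auto
      show "\<And>c1 c2. c1 \<in> C \<Longrightarrow> c2 \<in> C \<Longrightarrow> c1 \<noteq> c2 \<Longrightarrow> c1 \<inter> c2 = {}" using disj by blast
    qed
    thus ?thesis using UC by (metis dvd_triv_left)
  qed
  define \<phi> where "\<phi> g = (\<lambda>s\<in>S. gmult G (gdelta G g) s)" for g
  have S_stable: "gmult G (gdelta G g) s \<in> S" if g: "g \<in> carrier G" and s: "s \<in> S" for g s
  proof -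
    obtain c where c: "c \<in> T" "s = \<Phi> c" using s unfolding S_def by auto
    define c' where "c' = (\<lambda>h\<in>carrier G. c (inv g \<otimes> h))"
    have c'T: "c' \<in> T" using c(1) g unfolding c'_def T_def by auto
    have "gmult G (gdelta G g) s = (\<Sum>h\<in>carrier G. gsc (c h) (gmult G (gdelta G (g \<otimes> h)) m))"
      unfolding c(2) \<Phi>_def gmult_sum_right
      by (intro sum.cong refl) (simp add: gmult_sc_right gmult_assoc[symmetric] gdelta_mult g)
    also have "\<dots> = (\<Sum>h\<in>carrier G. gsc (c' (g \<otimes> h)) (gmult G (gdelta G (g \<otimes> h)) m))"
      using g by (intro sum.cong refl) (simp add: c'_def m_assoc[symmetric])
    also have "\<dots> = \<Phi> c'" unfolding \<Phi>_def
      by (rule sum_lmult[OF g, of "\<lambda>h. gsc (c' h) (gmult G (gdelta G h) m)"])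
    finally show ?thesis using c'T unfolding S_def by auto
  qed
  have inS: "s \<in> S \<Longrightarrow> s \<in> grpalg G" for s using SG by auto
  have phi_comp: "gmult G (gdelta G (g \<otimes> h)) s = gmult G (gdelta G g) (gmult G (gdelta G h) s)"
    if "g \<in> carrier G" "h \<in> carrier G" for g h s
    using that by (simp add: gmult_assoc[symmetric] gdelta_mult)
  have phiBij: "\<phi> g \<in> Bij S" if g: "g \<in> carrier G" for g
  proof -
    have "bij_betw (\<phi> g) S S"
    proof (rule bij_betw_byWitness[where f'="\<phi> (inv g)"])
      show "\<forall>a\<in>S. \<phi> (inv g) (\<phi> g a) = a"
        using g S_stable inS by (auto simp: \<phi>_def phi_comp[symmetric] gdelta_one_left)
      show "\<forall>a\<in>S. \<phi> g (\<phi> (inv g) a) = a"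
        using g S_stable inS by (auto simp: \<phi>_def phi_comp[symmetric] gdelta_one_left)
      show "\<phi> g ` S \<subseteq> S" using g S_stable by (auto simp: \<phi>_def)
      show "\<phi> (inv g) ` S \<subseteq> S" using g S_stable by (auto simp: \<phi>_def)
    qed
    thus ?thesis unfolding Bij_def \<phi>_def by auto
  qed
  have act: "group_action G S \<phi>"
    unfolding group_action_def group_hom_def group_hom_axioms_def
  proof (intro conjI)
    show "group G" by (rule is_group)
    show "group (BijGroup S)" by (rule group_BijGroup)
    show "\<phi> \<in> hom G (BijGroup S)"
    proof (rule homI)
      show "\<phi> g \<in> carrier (BijGroup S)" if "g \<in> carrier G" for g
        using phiBij[OF that] by (simp add: BijGroup_def)
      show "\<phi> (g \<otimes> h) = \<phi> g \<otimes>\<^bsub>BijGroup S\<^esub> \<phi> h" if g: "g \<in> carrier G" and h: "h \<in> carrier G" for g h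
      proof -
        have "\<phi> g \<otimes>\<^bsub>BijGroup S\<^esub> \<phi> h = compose S (\<phi> g) (\<phi> h)"
          using phiBij g h by (simp add: BijGroup_def)
        also have "\<dots> = \<phi> (g \<otimes> h)"
          using g h S_stable by (auto simp: compose_def \<phi>_def phi_comp fun_eq_iff)
        finally show ?thesis by simp
      qed
    qed
  qed
  interpret A: group_action G S \<phi> by (rule act)
  have "\<exists>s\<in>S. s \<noteq> 0 \<and> (\<forall>g\<in>carrier G. gmult G (gdelta G g) s = s)"
  proof (rule ccontr)
    assume nofix: "\<not> ?thesis"
    define Orbs where "Orbs = orbits G S \<phi>"
    have finO: "finite Orbs" unfolding Orbs_def orbits_def using finS by simp
    have S0: "0 \<in> S" using PhiE[of 0] ET[OF P0] unfolding S_def by (metis gsc_zero image_eqI)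
    have orb0: "orbit G \<phi> 0 = {0}"
      unfolding orbit_def \<phi>_def using S0 by (auto simp: gmult_zero_right)
    have O0: "{0} \<in> Orbs" unfolding Orbs_def orbits_def using S0 orb0 by force
    have sumO: "(\<Sum>orb\<in>Orbs. card orb) = card S"
      using A.disjoint_sum[OF finS, of "\<lambda>_. 1::nat"] unfolding Orbs_def by simp
    have dvdO: "p dvd card orb" if orbin: "orb \<in> Orbs - {{0}}" for orb
    proof -
      obtain x where x: "x \<in> S" "orb = orbit G \<phi> x" using orbin unfolding Orbs_def orbits_def by auto
      have x0: "x \<noteq> 0" using x orb0 orbin by auto
      have "card orb * card (stabilizer G \<phi> x) = p ^ n"
        using A.orbit_stabilizer_theorem[OF x(1)] x(2) cardG by (simp add: order_def)
      then have "card orb dvd p ^ n" by (metis dvd_triv_left)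
      then obtain i where i: "card orb = p ^ i" using divides_primepow_nat[OF prime] by auto
      show ?thesis
      proof (cases i)
        case 0
        then have "card orb = 1" using i by simp
        moreover have "x \<in> orb" using A.orbit_refl[OF x(1)] x(2) by simp
        ultimately have "orb = {x}" by (metis card_1_singletonE singletonD)
        then have "\<forall>g\<in>carrier G. gmult G (gdelta G g) x = x"
          using x unfolding orbit_def \<phi>_def by auto
        thus ?thesis using nofix x x0 by auto
      next
        case (Suc j) thus ?thesis using i by simp
      qed
    qed
    have "card S = (\<Sum>orb\<in>Orbs. card orb)" using sumO by simp
    also have "\<dots> = card {0::'a \<Rightarrow> 'k} + (\<Sum>orb\<in>Orbs - {{0}}. card orb)"
      using sum.remove[OF finO O0, of card] by simp
    finally have "card S = 1 + (\<Sum>orb\<in>Orbs - {{0}}. card orb)" by simp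
    moreover have "p dvd (\<Sum>orb\<in>Orbs - {{0}}. card orb)" by (rule dvd_sum) (use dvdO in auto)
    ultimately have "p dvd 1" using pS by (metis dvd_add_left_iff)
    thus False using prime by simp
  qed
  then obtain s where s: "s \<in> S" "s \<noteq> 0" "\<And>g. g \<in> carrier G \<Longrightarrow> gmult G (gdelta G g) s = s"
    by blast
  have sG: "s \<in> grpalg G" using s SG by auto
  have s_eq: "s = gsc (s \<one>) (gnrm G)" using fixed_nrm[OF sG s(3)] .
  have "s \<one> \<noteq> 0" using s(2) s_eq by (metis gsc_zero)
  have "gnrm G = gsc (inverse (s \<one>)) s"
    using \<open>s \<one> \<noteq> 0\<close> by (subst s_eq) (simp add: gsc_gsc)
  thus ?thesis using submod_sc[OF M] s(1) SM by auto
qed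


lemma vs_gsc: "vector_space (gsc :: 'k::field \<Rightarrow> ('a \<Rightarrow> 'k) \<Rightarrow> ('a \<Rightarrow> 'k))"
  unfolding Vector_Spaces.vector_space_def by (simp add: gsc_def fun_eq_iff algebra_simps)

lemma unit_lemma:
  fixes x :: "'a \<Rightarrow> 'k::field"
  assumes CH: "CHAR('k) = p" and xG: "x \<in> grpalg G" and ax: "gaug G x \<noteq> 0"
  shows "\<exists>y\<in>grpalg G. gmult G y x = gdelta G \<one>"
proof -
  define R where "R y = gmult G y x" for y :: "'a \<Rightarrow> 'k"
  have R0: "y = 0" if y: "y \<in> grpalg G" "R y = 0" for y
  proof (rule ccontr)
    assume ny: "y \<noteq> 0"
    define K where "K = {y \<in> grpalg G. gmult G y x = 0}"
    have K: "ga_submod G K"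
      unfolding ga_submod_def K_def
      apply (intro conjI)
      apply blast
      using grpalg_zero gmult_zero_left apply blast
      apply (simp add: grpalg_add gmult_add_left)
      by (simp add: gmult_in gmult_assoc gmult_zero_right)
    have "y \<in> K" using y unfolding K_def R_def by auto
    then have "gnrm G \<in> K" using FP[OF CH K _ ny] by blast
    then have "gsc (gaug G x) (gnrm G) = 0" unfolding K_def by (simp add: nrm_left)
    then have "gsc (gaug G x) (gnrm G) \<one> = 0" by simp
    thus False using ax by (simp add: gnrm_def)
  qed
  interpret V: vector_space "gsc :: 'k \<Rightarrow> ('a \<Rightarrow> 'k) \<Rightarrow> ('a \<Rightarrow> 'k)" by (rule vs_gsc)
  interpret VP: vector_space_pair "gsc :: 'k \<Rightarrow> ('a \<Rightarrow> 'k) \<Rightarrow> ('a \<Rightarrow> 'k)" "gsc :: 'k \<Rightarrow> ('a \<Rightarrow> 'k) \<Rightarrow> ('a \<Rightarrow> 'k)"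
    by unfold_locales
  have linR: "Vector_Spaces.linear gsc gsc R"
    unfolding linear_iff_module_hom module_hom_iff
    using V.module_axioms by (simp add: R_def gmult_add_left gmult_sc_left)
  define B where "B = (gdelta G ` carrier G :: ('a \<Rightarrow> 'k) set)"
  have finB: "finite B" unfolding B_def using fin by simp
  have injd: "inj_on (gdelta G :: 'a \<Rightarrow> 'a \<Rightarrow> 'k) (carrier G)"
    by (rule inj_onI) (metis gdelta_def one_neq_zero)
  have subG: "V.subspace (grpalg G)"
    by (rule V.subspaceI) (auto simp: grpalg_def)
  have spanB: "V.span B = grpalg G"
  proof
    show "V.span B \<subseteq> grpalg G"
      by (rule V.span_minimal[OF _ subG]) (auto simp: B_def gdelta_in)
    show "grpalg G \<subseteq> V.span B"
    proof
      fix f :: "'a \<Rightarrow> 'k" assume f: "f \<in> grpalg G"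
      have "f = (\<Sum>h\<in>carrier G. gsc (f h) (gdelta G h))"
      proof (rule ext)
        fix z
        have "(\<Sum>h\<in>carrier G. gsc (f h) (gdelta G h)) z = (\<Sum>h\<in>carrier G. f h * gdelta G h z)"
          by (simp add: sum_fun_apply)
        also have "\<dots> = (\<Sum>h\<in>carrier G. if h = z then f h else 0)"
          by (intro sum.cong refl) (auto simp: gdelta_def)
        also have "\<dots> = f z" using fin f by (simp add: sum.delta' grpalg_def)
        finally show "f z = (\<Sum>h\<in>carrier G. gsc (f h) (gdelta G h)) z" by simp
      qed
      also have "\<dots> \<in> V.span B"
        by (intro V.span_sum V.span_scale V.span_base) (auto simp: B_def)
      finally show "f \<in> V.span B" .
    qed
  qed
  have indB: "V.independent B"
  proof (rule V.independent_if_scalars_zero[OF finB])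
    fix u v assume su: "(\<Sum>w\<in>B. gsc (u w) w) = 0" and v: "v \<in> B"
    then obtain g where g: "g \<in> carrier G" "v = gdelta G g" unfolding B_def by auto
    have "(\<Sum>w\<in>B. gsc (u w) w) g = (\<Sum>h\<in>carrier G. u (gdelta G h) * gdelta G h g)"
      unfolding B_def by (simp add: sum_fun_apply sum.reindex[OF injd])
    also have "\<dots> = (\<Sum>h\<in>carrier G. if h = g then u (gdelta G h) else 0)"
      by (intro sum.cong refl) (auto simp: gdelta_def)
    also have "\<dots> = u v" using fin g by simp
    finally show "u v = 0" using su by simp
  qed
  have injR: "inj_on R (V.span B)"
  proof -
    have "inj_on R (V.span B) \<longleftrightarrow> (\<forall>x\<in>V.span B. R x = 0 \<longrightarrow> x = 0)"
      by (rule VP.linear_inj_on_iff_eq_0[OF linR V.subspace_span])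
    thus ?thesis using R0 unfolding spanB by blast
  qed
  have indRB: "V.independent (R ` B)"
    by (rule VP.linear_independent_injective_image[OF linR indB injR])
  have cardRB: "card (R ` B) = card B"
    by (rule card_image) (use injR V.span_superset in \<open>blast intro: inj_on_subset\<close>)
  have "gdelta G \<one> \<in> V.span (R ` B)"
  proof (rule ccontr)
    assume nin: "gdelta G \<one> \<notin> V.span (R ` B)"
    have ind2: "V.independent (insert (gdelta G \<one>) (R ` B))"
      by (rule V.independent_insertI[OF nin indRB])
    have "R ` B \<subseteq> grpalg G" by (auto simp: R_def gmult_in)
    then have "insert (gdelta G \<one>) (R ` B) \<subseteq> V.span B" using spanB gdelta_in[OF one_closed] by auto
    then have "finite (insert (gdelta G \<one>) (R ` B)) \<and> card (insert (gdelta G \<one>) (R ` B)) \<le> card B"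
      by (rule V.independent_span_bound[OF finB ind2])
    then have "card (insert (gdelta G \<one>) (R ` B)) \<le> card B" by (rule conjunct2)
    moreover have "gdelta G \<one> \<notin> R ` B"
    proof
      assume "gdelta G \<one> \<in> R ` B"
      then have "gdelta G \<one> \<in> V.span (R ` B)" by (rule V.span_base)
      with nin show False by (rule notE)
    qed
    then have "card (insert (gdelta G \<one>) (R ` B)) = Suc (card (R ` B))"
      using finB by (simp add: card_insert_if)
    ultimately show False using cardRB by linarith
  qed
  then have "gdelta G \<one> \<in> R ` grpalg G"
    using VP.linear_span_image[OF linR, of B] spanB by simp
  thus ?thesis unfolding R_def by auto
qed


lemma gaug_delta1: "gaug G (gdelta G \<one> :: 'a \<Rightarrow> 'k::field) = 1"
proof -
  have "gaug G (gdelta G \<one>) = (\<Sum>x\<in>carrier G. if x = \<one> then 1 else 0)"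
    unfolding gaug_def gdelta_def by simp
  also have "\<dots> = 1" using fin by simp
  finally show ?thesis .
qed

lemma gaug_delta: "g \<in> carrier G \<Longrightarrow> gaug G (gdelta G g :: 'a \<Rightarrow> 'k::field) = 1"
proof -
  assume g: "g \<in> carrier G"
  have "gaug G (gdelta G g) = (\<Sum>x\<in>carrier G. if x = g then 1 else 0)"
    unfolding gaug_def gdelta_def by simp
  also have "\<dots> = 1" using fin g by simp
  finally show ?thesis .
qed

lemma gaug_add: "gaug G (a + b) = gaug G a + gaug G b"
  by (simp add: gaug_def sum.distrib)

lemma gaug_zero: "gaug G 0 = 0"
  by (simp add: gaug_def)

lemma full_if_delta:
  fixes M :: "('a \<Rightarrow> 'k::field) set"
  shows "ga_submod G M \<Longrightarrow> gdelta G \<one> \<in> M \<Longrightarrow> M = grpalg G"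
proof
  assume M: "ga_submod G M" and d: "gdelta G \<one> \<in> M"
  show "M \<subseteq> grpalg G" using M by (auto simp: ga_submod_def)
  show "grpalg G \<subseteq> M"
  proof
    fix f :: "'a \<Rightarrow> 'k" assume f: "f \<in> grpalg G"
    have "gmult G f (gdelta G \<one>) \<in> M" by (rule submod_mult[OF M f d])
    thus "f \<in> M" using gdelta_one_right[OF f] by simp
  qed
qed

lemma nonzero_elem: "ga_submod G M \<Longrightarrow> M \<noteq> {0} \<Longrightarrow> \<exists>m\<in>M. m \<noteq> 0"
  using submod_zero by blast

lemma general:
  fixes M :: "('a \<Rightarrow> 'k::field) set"
  assumes CH: "CHAR('k) = p" and M: "ga_submod G M" and nz: "M \<noteq> {0}" and pr: "M \<noteq> grpalg G"
  shows "ga_indecomposable G M \<and> ga_projective_free G M"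
proof
  show "ga_indecomposable G M"
    unfolding ga_indecomposable_def
  proof (intro conjI nz allI impI)
    fix A B :: "('a \<Rightarrow> 'k) set"
    assume H: "ga_submod G A \<and> ga_submod G B \<and> A \<subseteq> M \<and> B \<subseteq> M \<and> A \<inter> B = {0} \<and> M = {a + b |a b. a \<in> A \<and> b \<in> B}"
    show "A = {0} \<or> B = {0}"
    proof (rule ccontr)
      assume "\<not> (A = {0} \<or> B = {0})"
      then obtain a b where "a \<in> A" "a \<noteq> 0" "b \<in> B" "b \<noteq> 0" using H nonzero_elem by metis
      then have "gnrm G \<in> A" "gnrm G \<in> B" using FP[OF CH] H by blast+
      then have "gnrm G \<in> A \<inter> B" by blast
      thus False using H gnrm_nz by auto
    qed
  qed
  show "ga_projective_free G M"
    unfolding ga_projective_free_def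
  proof (intro allI impI notI)
    fix Q :: "('a \<Rightarrow> 'k) set"
    assume H: "ga_summand G Q M \<and> Q \<noteq> {0}" and proj: "ga_projective G Q"
    have Q: "ga_submod G Q" "Q \<subseteq> M" using H unfolding ga_summand_def by auto
    obtain q0 where "q0 \<in> Q" "q0 \<noteq> 0" using H Q nonzero_elem by metis
    then have NQ: "gnrm G \<in> Q" using FP[OF CH Q(1)] by blast
    obtain nn i r where ir:
      "\<forall>q\<in>Q. i q \<in> ga_free G nn"
      "\<forall>a\<in>grpalg G. \<forall>q\<in>Q. i (gmult G a q) = (\<lambda>j. gmult G a (i q j))"
      "\<forall>v\<in>ga_free G nn. r v \<in> Q"
      "\<forall>a\<in>grpalg G. \<forall>v\<in>ga_free G nn. r (\<lambda>j. gmult G a (v j)) = gmult G a (r v)"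
      "\<forall>q\<in>Q. r (i q) = q"
      using proj unfolding ga_projective_def by blast
    define v0 where "v0 = i (gnrm G)"
    have v0F: "v0 \<in> ga_free G nn" using ir(1) NQ unfolding v0_def by auto
    have v0G: "v0 j \<in> grpalg G" for j
      using v0F unfolding ga_free_def by (cases "j < nn") (auto simp: grpalg_zero)
    have dN: "gmult G (gdelta G g) (gnrm G) = gnrm G" if "g \<in> carrier G" for g
      using that by (simp add: nrm_right gaug_delta)
    have v0fix: "gmult G (gdelta G g) (v0 j) = v0 j" if g: "g \<in> carrier G" for g j
    proof -
      have e1: "i (gmult G (gdelta G g) (gnrm G)) = (\<lambda>j. gmult G (gdelta G g) (v0 j))"
        using ir(2) gdelta_in[OF g] NQ unfolding v0_def by blast
      have "v0 = (\<lambda>j. gmult G (gdelta G g) (v0 j))" using e1 dN[OF g] unfolding v0_def by metis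
      thus ?thesis by (metis)
    qed
    have v0eq: "v0 j = gsc (v0 j \<one>) (gnrm G)" for j
      by (rule fixed_nrm[OF v0G]) (rule v0fix)
    define w where "w = (\<lambda>j. gsc (v0 j \<one>) (gdelta G \<one>))"
    have wF: "w \<in> ga_free G nn"
      using v0F unfolding ga_free_def w_def by (auto intro: gsc_in gdelta_in)
    have "(\<lambda>j. gmult G (gnrm G) (w j)) = v0"
    proof
      fix j
      show "gmult G (gnrm G) (w j) = v0 j"
        unfolding w_def gmult_sc_right gdelta_one_right[OF gnrm_in] using v0eq[of j] by simp
    qed
    then have "r v0 = gmult G (gnrm G) (r w)" using ir(4) gnrm_in wF by metis
    moreover have "r v0 = gnrm G" using ir(5) NQ unfolding v0_def by blast
    ultimately have "gnrm G = gsc (gaug G (r w)) (gnrm G)" by (simp add: nrm_left)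
    then have "gnrm G \<one> = gaug G (r w) * gnrm G \<one>" by (metis gsc_apply)
    then have aug1: "gaug G (r w) = 1" by (simp add: gnrm_def)
    have rwQ: "r w \<in> Q" using ir(3) wF by blast
    obtain y where y: "y \<in> grpalg G" "gmult G y (r w) = gdelta G \<one>"
      using unit_lemma[OF CH submod_in[OF Q(1) rwQ]] aug1 by auto
    have "gdelta G \<one> \<in> Q" using submod_mult[OF Q(1) y(1) rwQ] y(2) by simp
    then have "Q = grpalg G" by (rule full_if_delta[OF Q(1)])
    thus False using Q(2) M pr by (auto simp: ga_submod_def)
  qed
qed



lemma augI_submod: "ga_submod G (augI G :: ('a \<Rightarrow> 'k::field) set)"
  unfolding ga_submod_def augI_def
  by (auto simp: grpalg_zero grpalg_add gaug_zero gaug_add gmult_in aug_mult)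

lemma augI_max:
  assumes CH: "CHAR('k::field) = p"
  shows "ga_max_left G (augI G :: ('a \<Rightarrow> 'k) set)"
proof -
  have A1: "ga_submod G (augI G :: ('a \<Rightarrow> 'k) set)" by (rule augI_submod)
  have "gdelta G \<one> \<notin> (augI G :: ('a \<Rightarrow> 'k) set)" by (simp add: augI_def gaug_delta1)
  moreover have "gdelta G \<one> \<in> (grpalg G :: ('a \<Rightarrow> 'k) set)" by (simp add: gdelta_in)
  ultimately have A2: "(augI G :: ('a \<Rightarrow> 'k) set) \<noteq> grpalg G" by blast
  have A3: "N = grpalg G" if H: "ga_submod G N" "augI G \<subseteq> N" "N \<noteq> augI G" for N :: "('a \<Rightarrow> 'k) set"
  proof -
    obtain x where x: "x \<in> N" "x \<notin> augI G" using H by blast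
    have xG: "x \<in> grpalg G" using H x submod_in by blast
    then have "gaug G x \<noteq> 0" using x by (simp add: augI_def)
    then obtain y where y: "y \<in> grpalg G" "gmult G y x = gdelta G \<one>"
      using unit_lemma[OF CH xG] by blast
    have "gdelta G \<one> \<in> N" using submod_mult[of N y x] H x y by simp
    thus "N = grpalg G" using full_if_delta H by blast
  qed
  show ?thesis unfolding ga_max_left_def using A1 A2 A3 by blast
qed

lemma jac_aug:
  assumes CH: "CHAR('k::field) = p"
  shows "(ga_jacobson G :: ('a \<Rightarrow> 'k) set) \<subseteq> augI G"
  using augI_max[OF CH] unfolding ga_jacobson_def by blast

lemma prod_props:
  fixes A B :: "('a \<Rightarrow> 'k::field) set"
  assumes A: "ga_submod G A"
  shows "x \<in> ga_prod G A B \<Longrightarrow> x \<in> grpalg G \<and> (\<forall>r\<in>grpalg G. gmult G r x \<in> ga_prod G A B)"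
proof (induction rule: ga_prod.induct)
  case zero
  have "0 \<in> grpalg G" by (rule grpalg_zero)
  moreover have "\<forall>r\<in>grpalg G. gmult G r 0 \<in> ga_prod G A B" using ga_prod.zero gmult_zero_right by metis
  ultimately show ?case by blast
next
  case (prod a b)
  have "gmult G r (gmult G a b) \<in> ga_prod G A B" if "r \<in> grpalg G" for r
    unfolding gmult_assoc[symmetric] by (rule ga_prod.prod[OF submod_mult[OF A that prod(1)] prod(2)])
  thus ?case by (simp add: gmult_in)
next
  case (add x y)
  have "x + y \<in> grpalg G" using add grpalg_add by blast
  moreover have "\<forall>r\<in>grpalg G. gmult G r (x + y) \<in> ga_prod G A B"
  proof
    fix r :: "'a \<Rightarrow> 'k" assume r: "r \<in> grpalg G"
    have "gmult G r (x + y) = gmult G r x + gmult G r y" by (rule gmult_add_right)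
    thus "gmult G r (x + y) \<in> ga_prod G A B" using add r ga_prod.add by metis
  qed
  ultimately show ?case by blast
qed

lemma prod_submod:
  fixes A B :: "('a \<Rightarrow> 'k::field) set"
  assumes A: "ga_submod G A"
  shows "ga_submod G (ga_prod G A B)"
  unfolding ga_submod_def using prod_props[OF A] by (auto intro: ga_prod.zero ga_prod.add)

lemma prod_aug:
  fixes A B :: "('a \<Rightarrow> 'k::field) set"
  assumes A: "ga_submod G A" and B: "B \<subseteq> augI G"
  shows "ga_prod G A B \<subseteq> augI G"
proof
  fix x assume "x \<in> ga_prod G A B"
  then show "x \<in> augI G"
  proof (induction rule: ga_prod.induct)
    case zero show ?case unfolding augI_def using grpalg_zero gaug_zero by blast
  next
    case (prod a b) thus ?case using B by (auto simp: augI_def gmult_in aug_mult)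
  next
    case (add x y)
    have "x + y \<in> grpalg G" using add grpalg_add unfolding augI_def by blast
    moreover have "gaug G (x + y) = 0" using add gaug_add[of x y] unfolding augI_def by simp
    ultimately show ?case unfolding augI_def by blast
  qed
qed

lemma jpow_submod: "ga_submod G (ga_jpow G i :: ('a \<Rightarrow> 'k::field) set)"
proof (induction i)
  case 0
  show ?case unfolding ga_submod_def by (auto simp: grpalg_zero grpalg_add gmult_in)
next
  case (Suc i) thus ?case by (simp add: prod_submod)
qed

lemma jpow_aug:
  assumes CH: "CHAR('k::field) = p" and i: "i \<ge> 1"
  shows "(ga_jpow G i :: ('a \<Rightarrow> 'k) set) \<subseteq> augI G"
proof -
  obtain j where "i = Suc j" using i by (cases i) auto
  thus ?thesis using prod_aug[OF jpow_submod jac_aug[OF CH]] by simp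
qed

end

theorem lemma3p3:
  fixes G :: "('g, 'm) monoid_scheme" and p :: nat and n :: nat
    and I :: "('g \<Rightarrow> 'k::field) set"
  assumes "group G" and "finite (carrier G)" and "prime p"
    and "card (carrier G) = p ^ n"
    and "CHAR('k) = p"
  shows "(ga_ideal G I \<and> I \<noteq> {0} \<and> I \<noteq> grpalg G
            \<longrightarrow> ga_indecomposable G I \<and> ga_projective_free G I)
       \<and> (\<forall>i::nat. i \<ge> 1 \<and> ga_jpow G i \<noteq> ({0} :: ('g \<Rightarrow> 'k) set)
            \<longrightarrow> ga_indecomposable G (ga_jpow G i :: ('g \<Rightarrow> 'k) set)
              \<and> ga_projective_free G (ga_jpow G i :: ('g \<Rightarrow> 'k) set))"
proof -
  interpret P: pgroup G p n
    using assms by (intro pgroup.intro fgroup.intro fgroup_axioms.intro pgroup_axioms.intro) auto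
  have part1: "ga_indecomposable G I \<and> ga_projective_free G I"
    if H: "ga_ideal G I" "I \<noteq> {0}" "I \<noteq> grpalg G"
  proof -
    have "ga_submod G I" using H(1) unfolding ga_ideal_def ga_submod_def by blast
    thus ?thesis using P.general[OF assms(5) _ H(2) H(3)] by blast
  qed
  have part2: "ga_indecomposable G (ga_jpow G i :: ('g \<Rightarrow> 'k) set) \<and> ga_projective_free G (ga_jpow G i :: ('g \<Rightarrow> 'k) set)"
    if H: "i \<ge> 1" "ga_jpow G i \<noteq> ({0} :: ('g \<Rightarrow> 'k) set)" for i
  proof -
    have ne: "(ga_jpow G i :: ('g \<Rightarrow> 'k) set) \<noteq> grpalg G"
    proof
      assume eq: "(ga_jpow G i :: ('g \<Rightarrow> 'k) set) = grpalg G"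
      have "(gdelta G \<one>\<^bsub>G\<^esub> :: 'g \<Rightarrow> 'k) \<in> grpalg G" by (simp add: P.gdelta_in)
      then have "(gdelta G \<one>\<^bsub>G\<^esub> :: 'g \<Rightarrow> 'k) \<in> augI G" using P.jpow_aug[OF assms(5) H(1)] eq by blast
      thus False by (simp add: augI_def P.gaug_delta1)
    qed
    show ?thesis by (rule P.general[OF assms(5) P.jpow_submod H(2) ne])
  qed
  show ?thesis using part1 part2 by blast
qed

end
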